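(* Let $G$ be a finite group and $T$ a $G$-transfer system. Then $\mathrm{Hull}(T)=T_c$ if and only if $T$ is connected (has exactly one connected component).
   Context: A $G$-transfer system is a partial order $\to$ on the set of subgroups of $G$ such that: $K\to H$ implies $K\le H$; $H\to H$ for all $H$; $L\to K$ and $K\to H$ imply $L\to H$; $K\to H$ implies $K\cap L\to H\cap L$ for every $L\le G$; $K\to H$ implies $gKg^{-1}\to gHg^{-1}$ for all $g\in G$. Connected components are those of the underlying undirected graph on the subgroups of $G$ with edges $K\to H$. $T_c$ denotes the complete transfer system, containing $K\to H$ for all $K\le H\le G$. A transfer system is saturated if whenever $L\le K\le H$ and $L\to H$ is in it, then $K\to H$ is in it; $\mathrm{Hull}(T)$ is the smallest saturated $G$-transfer system containing $T$. *)

theory Defs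
  imports "HOL-Algebra.Group"
begin

text \<open>A relation on subsets of the carrier; R K H stands for K \<rightarrow> H.\<close>

definition conjugate_set :: "('a, 'b) monoid_scheme \<Rightarrow> 'a \<Rightarrow> 'a set \<Rightarrow> 'a set" where
  "conjugate_set G g K = (\<lambda>k. g \<otimes>\<^bsub>G\<^esub> k \<otimes>\<^bsub>G\<^esub> inv\<^bsub>G\<^esub> g) ` K"

definition transfer_system :: "('a, 'b) monoid_scheme \<Rightarrow> ('a set \<Rightarrow> 'a set \<Rightarrow> bool) \<Rightarrow> bool" where
  "transfer_system G R \<longleftrightarrow>
     (\<forall>K H. R K H \<longrightarrow> subgroup K G \<and> subgroup H G \<and> K \<subseteq> H) \<and>
     (\<forall>H. subgroup H G \<longrightarrow> R H H) \<and>
     (\<forall>K H. R K H \<and> R H K \<longrightarrow> K = H) \<and>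
     (\<forall>L K H. R L K \<and> R K H \<longrightarrow> R L H) \<and>
     (\<forall>K H L. R K H \<and> subgroup L G \<longrightarrow> R (K \<inter> L) (H \<inter> L)) \<and>
     (\<forall>K H g. R K H \<and> g \<in> carrier G \<longrightarrow> R (conjugate_set G g K) (conjugate_set G g H))"

definition complete_transfer :: "('a, 'b) monoid_scheme \<Rightarrow> 'a set \<Rightarrow> 'a set \<Rightarrow> bool" where
  "complete_transfer G K H \<longleftrightarrow> subgroup K G \<and> subgroup H G \<and> K \<subseteq> H"

definition saturated :: "('a, 'b) monoid_scheme \<Rightarrow> ('a set \<Rightarrow> 'a set \<Rightarrow> bool) \<Rightarrow> bool" where
  "saturated G R \<longleftrightarrow>
     (\<forall>L K H. subgroup L G \<and> subgroup K G \<and> subgroup H G \<and> L \<subseteq> K \<and> K \<subseteq> H \<and> R L H \<longrightarrow> R K H)"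

definition hull :: "('a, 'b) monoid_scheme \<Rightarrow> ('a set \<Rightarrow> 'a set \<Rightarrow> bool) \<Rightarrow> 'a set \<Rightarrow> 'a set \<Rightarrow> bool" where
  "hull G R K H \<longleftrightarrow>
     (\<forall>S. transfer_system G S \<and> saturated G S \<and> (\<forall>A B. R A B \<longrightarrow> S A B) \<longrightarrow> S K H)"

text \<open>Connected: the underlying undirected graph on subgroups has exactly one component
  (the vertex set is nonempty, so this means any two subgroups are linked).\<close>
definition connected_transfer :: "('a, 'b) monoid_scheme \<Rightarrow> ('a set \<Rightarrow> 'a set \<Rightarrow> bool) \<Rightarrow> bool" where
  "connected_transfer G R \<longleftrightarrow>
     (\<forall>K H. subgroup K G \<and> subgroup H G \<longrightarrow> (\<lambda>x y. R x y \<or> R y x)\<^sup>*\<^sup>* K H)"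

end

theory Submission
  imports Defs
begin

lemma conj_subgroup:
  fixes G (structure)
  assumes G: "group G" and K: "subgroup K G" and g: "g \<in> carrier G"
  shows "subgroup (conjugate_set G g K) G"
proof -
  interpret group G by (rule G)
  have Kc: "K \<subseteq> carrier G" using K subgroup.subset by blast
  show ?thesis unfolding conjugate_set_def
  proof (rule subgroupI)
    show "(\<lambda>k. g \<otimes> k \<otimes> inv g) ` K \<subseteq> carrier G" using Kc g by auto
    show "(\<lambda>k. g \<otimes> k \<otimes> inv g) ` K \<noteq> {}" using subgroup.one_closed[OF K] by blast
  next
    fix a assume "a \<in> (\<lambda>k. g \<otimes> k \<otimes> inv g) ` K"
    then obtain k where k: "k \<in> K" "a = g \<otimes> k \<otimes> inv g" by blast
    have kc: "k \<in> carrier G" using k Kc by blast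
    have "inv a = g \<otimes> inv k \<otimes> inv g"
      using k(2) kc g by (simp add: inv_mult_group m_assoc)
    moreover have "inv k \<in> K" using K k(1) by (rule subgroup.m_inv_closed)
    ultimately show "inv a \<in> (\<lambda>k. g \<otimes> k \<otimes> inv g) ` K" by blast
  next
    fix a b assume "a \<in> (\<lambda>k. g \<otimes> k \<otimes> inv g) ` K" "b \<in> (\<lambda>k. g \<otimes> k \<otimes> inv g) ` K"
    then obtain k l where k: "k \<in> K" "a = g \<otimes> k \<otimes> inv g" "l \<in> K" "b = g \<otimes> l \<otimes> inv g" by blast
    have kc: "k \<in> carrier G" "l \<in> carrier G" using k Kc by auto
    have "a \<otimes> b = g \<otimes> (k \<otimes> l) \<otimes> inv g"
      using k kc g by (simp add: m_assoc flip: m_assoc[of "inv g" g]) 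
    moreover have "k \<otimes> l \<in> K" using K k(1,3) by (rule subgroup.m_closed)
    ultimately show "a \<otimes> b \<in> (\<lambda>k. g \<otimes> k \<otimes> inv g) ` K" by blast
  qed
qed

lemma ts_sub: "transfer_system G R \<Longrightarrow> R K H \<Longrightarrow> subgroup K G \<and> subgroup H G \<and> K \<subseteq> H"
  unfolding transfer_system_def by (drule conjunct1) (erule allE, erule allE, erule mp)
lemma ts_refl: "transfer_system G R \<Longrightarrow> subgroup H G \<Longrightarrow> R H H"
  unfolding transfer_system_def by (drule conjunct2, drule conjunct1) (erule allE, erule mp)
lemma ts_antisym: "transfer_system G R \<Longrightarrow> R K H \<Longrightarrow> R H K \<Longrightarrow> K = H"
  unfolding transfer_system_def by (drule conjunct2, drule conjunct2, drule conjunct1) (erule allE, erule allE, erule mp, rule conjI)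
lemma ts_trans: "transfer_system G R \<Longrightarrow> R L K \<Longrightarrow> R K H \<Longrightarrow> R L H"
  unfolding transfer_system_def by (drule conjunct2, drule conjunct2, drule conjunct2, drule conjunct1) (erule allE, erule allE, erule allE, erule mp, rule conjI)
lemma ts_int: "transfer_system G R \<Longrightarrow> R K H \<Longrightarrow> subgroup L G \<Longrightarrow> R (K \<inter> L) (H \<inter> L)"
  unfolding transfer_system_def by (drule conjunct2, drule conjunct2, drule conjunct2, drule conjunct2, drule conjunct1) (erule allE, erule allE, erule allE, erule mp, rule conjI)
lemma ts_conj: "transfer_system G R \<Longrightarrow> R K H \<Longrightarrow> g \<in> carrier G \<Longrightarrow> R (conjugate_set G g K) (conjugate_set G g H)"
  unfolding transfer_system_def by (drule conjunct2, drule conjunct2, drule conjunct2, drule conjunct2, drule conjunct2) (erule allE, erule allE, erule allE, erule mp, rule conjI)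
lemma ts_intro:
  assumes a1: "\<And>K H. R K H \<Longrightarrow> subgroup K G \<and> subgroup H G \<and> K \<subseteq> H"
    and a2: "\<And>H. subgroup H G \<Longrightarrow> R H H"
    and a3: "\<And>K H. R K H \<Longrightarrow> R H K \<Longrightarrow> K = H"
    and a4: "\<And>L K H. R L K \<Longrightarrow> R K H \<Longrightarrow> R L H"
    and a5: "\<And>K H L. R K H \<Longrightarrow> subgroup L G \<Longrightarrow> R (K \<inter> L) (H \<inter> L)"
    and a6: "\<And>K H g. R K H \<Longrightarrow> g \<in> carrier G \<Longrightarrow> R (conjugate_set G g K) (conjugate_set G g H)"
  shows "transfer_system G R"
  unfolding transfer_system_def
  apply (intro conjI allI impI)
         apply (drule a1, erule conjunct1)
        apply (drule a1, erule conjunct2[THEN conjunct1])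
       apply (drule a1, erule conjunct2[THEN conjunct2])
      apply (erule a2)
     apply (erule conjE, erule (1) a3)
    apply (erule conjE, erule (1) a4)
   apply (erule conjE, erule (1) a5)
  apply (erule conjE, erule (1) a6)
  done
lemma sat_D: "saturated G S \<Longrightarrow> subgroup L G \<Longrightarrow> subgroup K G \<Longrightarrow> subgroup H G \<Longrightarrow> L \<subseteq> K \<Longrightarrow> K \<subseteq> H \<Longrightarrow> S L H \<Longrightarrow> S K H"
  unfolding saturated_def by (erule allE, erule allE, erule allE, erule mp) simp
lemma sat_I: "(\<And>L K H. subgroup L G \<Longrightarrow> subgroup K G \<Longrightarrow> subgroup H G \<Longrightarrow> L \<subseteq> K \<Longrightarrow> K \<subseteq> H \<Longrightarrow> S L H \<Longrightarrow> S K H) \<Longrightarrow> saturated G S"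
  unfolding saturated_def by (intro allI impI) (elim conjE, assumption)
lemma complete_ts:
  fixes G (structure)
  assumes G: "group G"
  shows "transfer_system G (complete_transfer G)" "saturated G (complete_transfer G)"
proof -
  interpret group G by (rule G)
  show "transfer_system G (complete_transfer G)"
  proof (rule ts_intro)
    fix K H L assume "complete_transfer G K H" "subgroup L G"
    then show "complete_transfer G (K \<inter> L) (H \<inter> L)"
      unfolding complete_transfer_def using subgroups_Inter_pair by blast
  next
    fix K H g assume "complete_transfer G K H" "g \<in> carrier G"
    then show "complete_transfer G (conjugate_set G g K) (conjugate_set G g H)"
      unfolding complete_transfer_def using conj_subgroup[OF G]
      by (auto simp: conjugate_set_def)
  qed (auto simp: complete_transfer_def)
  show "saturated G (complete_transfer G)"
    by (rule sat_I) (simp add: complete_transfer_def)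
qed

theorem mainTheorem3:
  fixes G :: "('a, 'b) monoid_scheme" and T :: "'a set \<Rightarrow> 'a set \<Rightarrow> bool"
  assumes "group G" and "finite (carrier G)" and "transfer_system G T"
  shows "hull G T = complete_transfer G \<longleftrightarrow> connected_transfer G T"
proof -
  interpret group G by (rule assms(1))
  have T1: "subgroup K G" "subgroup H G" "K \<subseteq> H" if "T K H" for K H
    using ts_sub[OF assms(3) that] by auto
  have TK: "T K K" if "subgroup K G" for K
    using ts_refl[OF assms(3) that] .
  have T5: "T (K \<inter> L) (H \<inter> L)" if "T K H" "subgroup L G" for K H L
    using ts_int[OF assms(3) that] .
  have T6: "T (conjugate_set G g K) (conjugate_set G g H)" if "T K H" "g \<in> carrier G" for K H g
    using ts_conj[OF assms(3) that] .
  define E where "E = (\<lambda>x y. T x y \<or> T y x)"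
  have hull_le: "complete_transfer G K H" if "hull G T K H" for K H
  proof -
    have "\<forall>A B. T A B \<longrightarrow> complete_transfer G A B"
      using T1 unfolding complete_transfer_def by blast
    then show ?thesis using that complete_ts[OF assms(1)] unfolding hull_def by blast
  qed
  show ?thesis
  proof
    assume h: "hull G T = complete_transfer G"
    define S where "S = (\<lambda>K H. subgroup K G \<and> subgroup H G \<and> K \<subseteq> H \<and> E\<^sup>*\<^sup>* K H)"
    have int: "E\<^sup>*\<^sup>* (K \<inter> L) (H \<inter> L)" if "E\<^sup>*\<^sup>* K H" "subgroup L G" for K H L
      using that(1)
    proof (induction rule: rtranclp_induct)
      case base then show ?case by simp
    next
      case (step y z)
      have "E (y \<inter> L) (z \<inter> L)" using step(2) T5 that(2) unfolding E_def by blast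
      then show ?case using step(3) by (rule rtranclp.rtrancl_into_rtrancl[rotated])
    qed
    have cnj: "E\<^sup>*\<^sup>* (conjugate_set G g K) (conjugate_set G g H)" if "E\<^sup>*\<^sup>* K H" "g \<in> carrier G" for K H g
      using that(1)
    proof (induction rule: rtranclp_induct)
      case base then show ?case by simp
    next
      case (step y z)
      have "E (conjugate_set G g y) (conjugate_set G g z)" using step(2) T6 that(2) unfolding E_def by blast
      then show ?case using step(3) by (rule rtranclp.rtrancl_into_rtrancl[rotated])
    qed
    have Esym: "E\<^sup>*\<^sup>* B A" if "E\<^sup>*\<^sup>* A B" for A B
    proof -
      have "symp E" unfolding E_def symp_def by blast
      then show ?thesis using that by (metis symp_rtranclp sympD)
    qed
    have STS: "transfer_system G S"
    proof (rule ts_intro)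
      fix K H assume "S K H" then show "subgroup K G \<and> subgroup H G \<and> K \<subseteq> H" unfolding S_def by blast
    next
      fix H assume "subgroup H G" then show "S H H" unfolding S_def by simp
    next
      fix K H assume "S K H" "S H K" then show "K = H" unfolding S_def by blast
    next
      fix L K H assume a: "S L K" "S K H"
      then show "S L H" unfolding S_def
        using rtranclp_trans[of E L K H] order_trans[of L K H] by blast
    next
      fix K H L assume a: "S K H" "subgroup L G"
      have "subgroup (K \<inter> L) G" using T1(1)[OF T5[OF TK]] a unfolding S_def by blast
      moreover have "subgroup (H \<inter> L) G" using T1(1)[OF T5[OF TK]] a unfolding S_def by blast
      moreover have "K \<inter> L \<subseteq> H \<inter> L" using a unfolding S_def by blast
      moreover have "E\<^sup>*\<^sup>* (K \<inter> L) (H \<inter> L)" using int a unfolding S_def by blast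
      ultimately show "S (K \<inter> L) (H \<inter> L)" unfolding S_def by blast
    next
      fix K H g assume a: "S K H" "g \<in> carrier G"
      have "subgroup (conjugate_set G g K) G" using T1(1)[OF T6[OF TK]] a unfolding S_def by blast
      moreover have "subgroup (conjugate_set G g H) G" using T1(1)[OF T6[OF TK]] a unfolding S_def by blast
      moreover have "conjugate_set G g K \<subseteq> conjugate_set G g H"
        using a unfolding S_def conjugate_set_def by blast
      moreover have "E\<^sup>*\<^sup>* (conjugate_set G g K) (conjugate_set G g H)" using cnj a unfolding S_def by blast
      ultimately show "S (conjugate_set G g K) (conjugate_set G g H)" unfolding S_def by blast
    qed
    have Ssat: "saturated G S"
    proof (rule sat_I)
      fix L K H assume a: "subgroup L G" "subgroup K G" "subgroup H G" "L \<subseteq> K" "K \<subseteq> H" "S L H"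
      have "E\<^sup>*\<^sup>* (L \<inter> K) (H \<inter> K)" using a int unfolding S_def by blast
      moreover have "L \<inter> K = L" "H \<inter> K = K" using a by auto
      ultimately have "E\<^sup>*\<^sup>* L K" by simp
      then have "E\<^sup>*\<^sup>* K L" by (rule Esym)
      moreover have "E\<^sup>*\<^sup>* L H" using a unfolding S_def by blast
      ultimately have "E\<^sup>*\<^sup>* K H" by (rule rtranclp_trans)
      then show "S K H" using a unfolding S_def by blast
    qed
    have Scont: "\<forall>A B. T A B \<longrightarrow> S A B" using T1 unfolding S_def E_def by blast
    have toG: "E\<^sup>*\<^sup>* K (carrier G)" if "subgroup K G" for K
    proof -
      have "complete_transfer G K (carrier G)" using that subgroup_self subgroup.subset
        unfolding complete_transfer_def by blast
      then have "hull G T K (carrier G)" using h by simp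
      then have "S K (carrier G)" using STS Ssat Scont unfolding hull_def by blast
      then show ?thesis unfolding S_def by blast
    qed
    show "connected_transfer G T" unfolding connected_transfer_def
    proof (intro allI impI)
      fix K H assume a: "subgroup K G \<and> subgroup H G"
      have "E\<^sup>*\<^sup>* K (carrier G)" using toG a by blast
      moreover have "E\<^sup>*\<^sup>* (carrier G) H" using toG a Esym by blast
      ultimately have "E\<^sup>*\<^sup>* K H" by (rule rtranclp_trans)
      then show "(\<lambda>x y. T x y \<or> T y x)\<^sup>*\<^sup>* K H" unfolding E_def .
    qed
  next
    assume c: "connected_transfer G T"
    show "hull G T = complete_transfer G"
    proof (intro ext iffI)
      fix K H assume "hull G T K H" then show "complete_transfer G K H" by (rule hull_le)
    next
      fix K H assume kh: "complete_transfer G K H"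
      show "hull G T K H" unfolding hull_def
      proof (intro allI impI)
        fix S assume s: "transfer_system G S \<and> saturated G S \<and> (\<forall>A B. T A B \<longrightarrow> S A B)"
        have ST: "\<And>A B. T A B \<Longrightarrow> S A B" using s by blast
        have sts: "transfer_system G S" and ssat: "saturated G S" using s by blast+
        have Srefl: "S A A" if "subgroup A G" for A
          using ts_refl[OF sts that] .
        have Strans: "S A C" if "S A B" "S B C" for A B C
          using ts_trans[OF sts that] .
        have Sint: "S (A \<inter> L) (B \<inter> L)" if "S A B" "subgroup L G" for A B L
          using ts_int[OF sts that] .
        have Ssat: "S B C" if "subgroup A G" "subgroup B G" "subgroup C G" "A \<subseteq> B" "B \<subseteq> C" "S A C" for A B C
          using sat_D[OF ssat that] .
        have GG: "subgroup (carrier G) G" by (rule subgroup_self)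
        have P: "S A (carrier G)" if "subgroup A G" for A
        proof -
          have "E\<^sup>*\<^sup>* (carrier G) A" using c GG that unfolding connected_transfer_def E_def by blast
          then show ?thesis
          proof (induction rule: rtranclp_induct)
            case base then show ?case using Srefl GG by blast
          next
            case (step y z)
            show ?case
            proof (cases "T y z")
              case True
              note yz = T1[OF True]
              have "z \<subseteq> carrier G" using yz(2) subgroup.subset by blast
              show ?thesis by (rule Ssat[OF yz(1) yz(2) GG yz(3) \<open>z \<subseteq> carrier G\<close> step(3)])
            next
              case False
              then have "T z y" using step(2) unfolding E_def by blast
              then show ?thesis using Strans[OF ST step(3)] by blast
            qed
          qed
        qed
        have k: "subgroup K G" "subgroup H G" "K \<subseteq> H" using kh unfolding complete_transfer_def by auto
        have "S (K \<inter> H) (carrier G \<inter> H)" using Sint[OF P[OF k(1)] k(2)] .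
        moreover have "K \<inter> H = K" "carrier G \<inter> H = H" using k subgroup.subset by blast+
        ultimately show "S K H" by simp
      qed
    qed
  qed
qed

end
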